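(* Let $p_{Y_1,Y_2|X_1,X_2}$ be a discrete memoryless channel and let $(U_{10},U_{11},V_{11},V_{20},V_{22},X_1,X_2)$ be finite-valued random variables with any joint distribution, $(Y_1,Y_2)$ generated through the channel. Let $\mathcal R_{CC}(p)$ be the set of $(R_1,R_2)$ satisfying \begin{align*} R_1 &\le I(Y_1;V_{11},U_{11},V_{20},U_{10}),\\ R_2 &\le I(Y_2;V_{20},V_{22}|U_{10})-I(V_{22},V_{20};U_{11}|U_{10}),\\ R_1+R_2 &\le I(Y_1;V_{11},U_{11}|V_{20},U_{10})+I(Y_2;V_{22},V_{20},U_{10})-I(V_{22};U_{11},V_{11}|V_{20},U_{10}),\\ R_1+R_2 &\le I(Y_1;V_{11},U_{11},V_{20},U_{10})+I(Y_2;V_{22}|V_{20},U_{10})-I(V_{22};U_{11},V_{11}|V_{20},U_{10}),\\ 2R_2+R_1 &\le I(Y_1;V_{11},U_{11},V_{20}|U_{10})+I(Y_2;V_{22}|V_{20},U_{10})+I(Y_2;V_{20},V_{22},U_{10})\\ &\quad -I(V_{22};U_{11},V_{11}|V_{20},U_{10})-I(V_{22},V_{20};U_{11}|U_{10}), \end{align*} and let $\mathcal R_{CC}=\bigcup_p \mathcal R_{CC}(p)$. Let $p'$ be obtained from $p$ by setting $U'_{11}$ constant and $V'_{11}=(V_{11},U_{11})$, all other variables unchanged. Then $\mathcal R_{CC}(p)\subseteq\mathcal R_{CC}(p')$; in particular $\mathcal R_{CC}$ equals the union of $\mathcal R_{CC}(p)$ over distributions in which $U_{11}$ is constant.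
   Context: $\mathcal R_{CC}$ is the achievable rate region of Cao and Chen for the cognitive interference channel, written with index 1 for the primary user and index 2 for the cognitive user; $U_{10},U_{11},V_{11},V_{20},V_{22}$ are auxiliary random variables. All mutual informations are evaluated under the indicated joint distribution. *)

theory Defs
  imports "HOL-Probability.Probability"
begin

definition cmi :: "'w pmf \<Rightarrow> ('w \<Rightarrow> 'a) \<Rightarrow> ('w \<Rightarrow> 'b) \<Rightarrow> ('w \<Rightarrow> 'c) \<Rightarrow> real" where
  "cmi M X Y Z =
     (let J = map_pmf (\<lambda>w. (X w, Y w, Z w)) M;
          JXZ = map_pmf (\<lambda>w. (X w, Z w)) M;
          JYZ = map_pmf (\<lambda>w. (Y w, Z w)) M;
          JZ = map_pmf Z M
      in (\<Sum>(x, y, z) \<in> set_pmf J.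
            pmf J (x, y, z) *
            log 2 (pmf J (x, y, z) * pmf JZ z / (pmf JXZ (x, z) * pmf JYZ (y, z)))))"

definition mi :: "'w pmf \<Rightarrow> ('w \<Rightarrow> 'a) \<Rightarrow> ('w \<Rightarrow> 'b) \<Rightarrow> real" where
  "mi M X Y = cmi M X Y (\<lambda>_. ())"

definition full_dist ::
  "('x1 \<times> 'x2 \<Rightarrow> ('y1 \<times> 'y2) pmf) \<Rightarrow>
   ('u10 \<times> 'u11 \<times> 'v11 \<times> 'v20 \<times> 'v22 \<times> 'x1 \<times> 'x2) pmf \<Rightarrow>
   (('u10 \<times> 'u11 \<times> 'v11 \<times> 'v20 \<times> 'v22 \<times> 'x1 \<times> 'x2) \<times> ('y1 \<times> 'y2)) pmf" where
  "full_dist W P = P \<bind> (\<lambda>a. case a of (u10, u11, v11, v20, v22, x1, x2) \<Rightarrow>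
                             map_pmf (\<lambda>y. (a, y)) (W (x1, x2)))"

definition gU10 where "gU10 w = (case w of ((u10, u11, v11, v20, v22, x1, x2), y1, y2) \<Rightarrow> u10)"
definition gU11 where "gU11 w = (case w of ((u10, u11, v11, v20, v22, x1, x2), y1, y2) \<Rightarrow> u11)"
definition gV11 where "gV11 w = (case w of ((u10, u11, v11, v20, v22, x1, x2), y1, y2) \<Rightarrow> v11)"
definition gV20 where "gV20 w = (case w of ((u10, u11, v11, v20, v22, x1, x2), y1, y2) \<Rightarrow> v20)"
definition gV22 where "gV22 w = (case w of ((u10, u11, v11, v20, v22, x1, x2), y1, y2) \<Rightarrow> v22)"
definition gY1 where "gY1 w = (case w of ((u10, u11, v11, v20, v22, x1, x2), y1, y2) \<Rightarrow> y1)"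
definition gY2 where "gY2 w = (case w of ((u10, u11, v11, v20, v22, x1, x2), y1, y2) \<Rightarrow> y2)"

definition RCC ::
  "('x1::finite \<times> 'x2::finite \<Rightarrow> ('y1::finite \<times> 'y2::finite) pmf) \<Rightarrow>
   ('u10::finite \<times> 'u11::finite \<times> 'v11::finite \<times> 'v20::finite \<times> 'v22::finite \<times> 'x1 \<times> 'x2) pmf \<Rightarrow>
   (real \<times> real) set" where
  "RCC W P =
    (let M = full_dist W P;
         U10 = gU10; U11 = gU11; V11 = gV11; V20 = gV20; V22 = gV22; Y1 = gY1; Y2 = gY2
     in {(R1, R2).
       R1 \<le> mi M Y1 (\<lambda>w. (V11 w, U11 w, V20 w, U10 w)) \<and>
       R2 \<le> cmi M Y2 (\<lambda>w. (V20 w, V22 w)) U10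
             - cmi M (\<lambda>w. (V22 w, V20 w)) U11 U10 \<and>
       R1 + R2 \<le> cmi M Y1 (\<lambda>w. (V11 w, U11 w)) (\<lambda>w. (V20 w, U10 w))
             + mi M Y2 (\<lambda>w. (V22 w, V20 w, U10 w))
             - cmi M V22 (\<lambda>w. (U11 w, V11 w)) (\<lambda>w. (V20 w, U10 w)) \<and>
       R1 + R2 \<le> mi M Y1 (\<lambda>w. (V11 w, U11 w, V20 w, U10 w))
             + cmi M Y2 V22 (\<lambda>w. (V20 w, U10 w))
             - cmi M V22 (\<lambda>w. (U11 w, V11 w)) (\<lambda>w. (V20 w, U10 w)) \<and>
       2 * R2 + R1 \<le> cmi M Y1 (\<lambda>w. (V11 w, U11 w, V20 w)) U10
             + cmi M Y2 V22 (\<lambda>w. (V20 w, U10 w))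
             + mi M Y2 (\<lambda>w. (V20 w, V22 w, U10 w))
             - cmi M V22 (\<lambda>w. (U11 w, V11 w)) (\<lambda>w. (V20 w, U10 w))
             - cmi M (\<lambda>w. (V22 w, V20 w)) U11 U10})"

definition merge_U11 ::
  "('u10 \<times> 'u11 \<times> 'v11 \<times> 'v20 \<times> 'v22 \<times> 'x1 \<times> 'x2) pmf \<Rightarrow>
   ('u10 \<times> unit \<times> ('v11 \<times> 'u11) \<times> 'v20 \<times> 'v22 \<times> 'x1 \<times> 'x2) pmf" where
  "merge_U11 P = map_pmf (\<lambda>(u10, u11, v11, v20, v22, x1, x2).
                            (u10, (), (v11, u11), v20, v22, x1, x2)) P"

end

theory Submission
  imports Defs
begin

lemma cmi_map: "cmi (map_pmf \<phi> M) X Y Z = cmi M (\<lambda>w. X (\<phi> w)) (\<lambda>w. Y (\<phi> w)) (\<lambda>w. Z (\<phi> w))"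
  unfolding cmi_def by (simp add: pmf.map_comp o_def)

lemma cmi_relabel:
  assumes f: "inj f" and g: "inj g" and h: "inj h"
  shows "cmi M (\<lambda>w. f (X w)) (\<lambda>w. g (Y w)) (\<lambda>w. h (Z w)) = cmi M X Y Z"
proof -
  define k where "k = (\<lambda>(x,y,z). (f x, g y, h z))"
  have ik: "inj k" using assms unfolding k_def inj_def by auto
  have ixz: "inj (map_prod f h)" using assms by (auto simp: inj_def)
  have iyz: "inj (map_prod g h)" using assms by (auto simp: inj_def)
  define J where "J = map_pmf (\<lambda>w. (X w, Y w, Z w)) M"
  define XZ where "XZ = map_pmf (\<lambda>w. (X w, Z w)) M"
  define YZ where "YZ = map_pmf (\<lambda>w. (Y w, Z w)) M"
  define ZZ where "ZZ = map_pmf Z M"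
  have J': "map_pmf (\<lambda>w. (f (X w), g (Y w), h (Z w))) M = map_pmf k J"
    by (simp add: J_def pmf.map_comp o_def k_def)
  have XZ': "map_pmf (\<lambda>w. (f (X w), h (Z w))) M = map_pmf (map_prod f h) XZ"
    by (simp add: XZ_def pmf.map_comp o_def)
  have YZ': "map_pmf (\<lambda>w. (g (Y w), h (Z w))) M = map_pmf (map_prod g h) YZ"
    by (simp add: YZ_def pmf.map_comp o_def)
  have ZZ': "map_pmf (\<lambda>w. h (Z w)) M = map_pmf h ZZ"
    by (simp add: ZZ_def pmf.map_comp o_def)
  have pJ: "pmf (map_pmf k J) (f x, g y, h z) = pmf J (x, y, z)" for x y z
    using pmf_map_inj'[OF ik, of J "(x,y,z)"] by (simp add: k_def)
  have pXZ: "pmf (map_pmf (map_prod f h) XZ) (f x, h z) = pmf XZ (x, z)" for x z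
    using pmf_map_inj'[OF ixz, of XZ "(x,z)"] by simp
  have pYZ: "pmf (map_pmf (map_prod g h) YZ) (g y, h z) = pmf YZ (y, z)" for y z
    using pmf_map_inj'[OF iyz, of YZ "(y,z)"] by simp
  have pZ: "\<And>z. pmf (map_pmf h ZZ) (h z) = pmf ZZ z"
    using pmf_map_inj'[OF h] by simp
  show ?thesis
    unfolding cmi_def Let_def J' XZ' YZ' ZZ'
    apply (simp only: J_def[symmetric] XZ_def[symmetric] YZ_def[symmetric] ZZ_def[symmetric] set_map_pmf)
    apply (subst sum.reindex)
    apply (rule inj_on_subset[OF ik], simp)
    apply (rule sum.cong, rule refl)
    apply (auto simp: pJ[unfolded k_def] pXZ pYZ pZ k_def)
    done
qed

lemma cmi_const: "cmi M X (\<lambda>_. c) Z = 0"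
proof -
  define XZ where "XZ = map_pmf (\<lambda>w. (X w, Z w)) M"
  define ZZ where "ZZ = map_pmf Z M"
  have J: "map_pmf (\<lambda>w. (X w, c, Z w)) M = map_pmf (\<lambda>(x,z). (x,c,z)) XZ"
    by (simp add: XZ_def pmf.map_comp o_def)
  have YZ: "map_pmf (\<lambda>w. (c, Z w)) M = map_pmf (\<lambda>z. (c,z)) ZZ"
    by (simp add: ZZ_def pmf.map_comp o_def)
  have i1: "inj (\<lambda>(x,z). (x,c,z))" by (auto simp: inj_def)
  have i2: "inj (\<lambda>z. (c,z))" by (auto simp: inj_def)
  have p1: "pmf (map_pmf (\<lambda>(x,z). (x,c,z)) XZ) (x,c,z) = pmf XZ (x,z)" for x z
    using pmf_map_inj'[OF i1, of XZ "(x,z)"] by simp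
  have p2: "\<And>z. pmf (map_pmf (\<lambda>z. (c,z)) ZZ) (c,z) = pmf ZZ z"
    using pmf_map_inj'[OF i2] by metis
  have zpos: "pmf ZZ z \<noteq> 0" if "(x, z) \<in> set_pmf XZ" for x z
  proof -
    have "z \<in> set_pmf ZZ" using that by (auto simp: XZ_def ZZ_def)
    then show ?thesis by (simp add: set_pmf_eq')
  qed
  show ?thesis
    unfolding cmi_def Let_def J YZ
    apply (simp only: XZ_def[symmetric] ZZ_def[symmetric])
    apply (rule sum.neutral)
    apply (clarsimp simp: p1 p2)
    using zpos apply blast
    done
qed

lemma ln_ge_1_minus_inv: "a > 0 \<Longrightarrow> ln (a::real) \<ge> 1 - 1 / a"
proof -
  assume a: "a > 0"
  have "ln (1/a) \<le> 1/a - 1" using a by (intro ln_le_minus_one) simp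
  moreover have "ln (1/a) = - ln a" using a by (simp add: ln_div)
  ultimately show ?thesis by simp
qed

lemma marg:
  fixes XZ :: "('a::finite \<times> 'c::finite) pmf"
  shows "(\<Sum>x\<in>UNIV. pmf XZ (x, z)) = pmf (map_pmf snd XZ) z"
proof -
  have e: "snd -` {z} = (\<lambda>x. (x,z)) ` UNIV" by force
  have "pmf (map_pmf snd XZ) z = sum (pmf XZ) (snd -` {z})"
    by (simp add: pmf_map measure_measure_pmf_finite)
  also have "\<dots> = (\<Sum>x\<in>UNIV. pmf XZ (x, z))"
    unfolding e by (subst sum.reindex) (auto simp: inj_on_def)
  finally show ?thesis by simp
qed

lemma cmi_nonneg:
  fixes M :: "'w::finite pmf" and X :: "'w \<Rightarrow> 'a::finite" and Y :: "'w \<Rightarrow> 'b::finite"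
    and Z :: "'w \<Rightarrow> 'c::finite"
  shows "cmi M X Y Z \<ge> 0"
proof -
  define J where "J = map_pmf (\<lambda>w. (X w, Y w, Z w)) M"
  define XZ where "XZ = map_pmf (\<lambda>w. (X w, Z w)) M"
  define YZ where "YZ = map_pmf (\<lambda>w. (Y w, Z w)) M"
  define ZZ where "ZZ = map_pmf Z M"
  define F where "F = (\<lambda>(x,y,z). pmf J (x, y, z) *
            log 2 (pmf J (x, y, z) * pmf ZZ z / (pmf XZ (x, z) * pmf YZ (y, z))))"
  define q where "q = (\<lambda>(x,y,z). pmf XZ (x,z) * pmf YZ (y,z) / pmf ZZ z)"
  have cm: "cmi M X Y Z = (\<Sum>t\<in>set_pmf J. F t)"
    unfolding cmi_def Let_def J_def XZ_def YZ_def ZZ_def F_def by simp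
  have q0: "q t \<ge> 0" for t unfolding q_def by (auto simp: case_prod_beta)
  have FT: "F t \<ge> (pmf J t - q t) / ln 2" if t: "t \<in> set_pmf J" for t
  proof -
    obtain x y z where tt: "t = (x,y,z)" by (cases t) auto
    have j: "pmf J t > 0" using t by (simp add: pmf_positive)
    have "(x,z) \<in> set_pmf XZ" "(y,z) \<in> set_pmf YZ" "z \<in> set_pmf ZZ"
      using t unfolding tt J_def XZ_def YZ_def ZZ_def by auto
    then have xz: "pmf XZ (x,z) > 0" and yz: "pmf YZ (y,z) > 0" and zz: "pmf ZZ z > 0"
      by (simp_all add: pmf_positive)
    define a where "a = pmf J t * pmf ZZ z / (pmf XZ (x, z) * pmf YZ (y, z))"
    have a0: "a > 0" unfolding a_def using j xz yz zz by simp
    have ia: "pmf J t / a = q t"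
    proof -
      have g: "p / (p * c / (d * e)) = d * e / c" if "p > 0" "c > 0" "d > 0" "e > 0" for p c d e :: real
        using that by (simp add: divide_simps)
      show ?thesis unfolding a_def q_def using g[OF j zz xz yz] by (simp add: tt)
    qed
    have "F t = pmf J t * ln a / ln 2" unfolding F_def tt a_def by (simp add: log_def tt)
    also have "\<dots> \<ge> pmf J t * (1 - 1/a) / ln 2"
      using ln_ge_1_minus_inv[OF a0] j by (intro divide_right_mono mult_left_mono) auto
    moreover have "pmf J t * (1 - 1/a) = pmf J t - q t" using ia by (simp add: algebra_simps)
    ultimately show ?thesis by simp
  qed
  have fin: "finite (set_pmf J)" by simp
  have s1: "(\<Sum>t\<in>set_pmf J. pmf J t) = 1" by (rule sum_pmf_eq_1) auto
  have "(\<Sum>t\<in>set_pmf J. q t) \<le> (\<Sum>t\<in>UNIV. q t)"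
    by (rule sum_mono2) (auto simp: q0)
  also have "(\<Sum>t\<in>UNIV. q t) = (\<Sum>x\<in>UNIV. \<Sum>y\<in>UNIV. \<Sum>z\<in>UNIV. q (x,y,z))"
    by (simp add: UNIV_Times_UNIV[symmetric] sum.cartesian_product del: UNIV_Times_UNIV)
  also have "\<dots> = (\<Sum>x\<in>UNIV. \<Sum>z\<in>UNIV. \<Sum>y\<in>UNIV. q (x,y,z))"
    by (rule sum.cong[OF refl], rule sum.swap)
  also have "\<dots> = (\<Sum>z\<in>UNIV. \<Sum>x\<in>UNIV. \<Sum>y\<in>UNIV. q (x,y,z))"
    by (rule sum.swap)
  also have "\<dots> = (\<Sum>z\<in>UNIV. pmf ZZ z)"
  proof (rule sum.cong[OF refl])
    fix z
    have mx: "(\<Sum>x\<in>UNIV. pmf XZ (x, z)) = pmf ZZ z"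
      unfolding marg XZ_def ZZ_def by (simp add: pmf.map_comp o_def)
    have my: "(\<Sum>y\<in>UNIV. pmf YZ (y, z)) = pmf ZZ z"
      unfolding marg YZ_def ZZ_def by (simp add: pmf.map_comp o_def)
    have "(\<Sum>x\<in>UNIV. \<Sum>y\<in>UNIV. q (x,y,z)) =
          (\<Sum>x\<in>UNIV. pmf XZ (x, z)) * (\<Sum>y\<in>UNIV. pmf YZ (y, z)) / pmf ZZ z"
      by (simp add: q_def sum_product sum_divide_distrib)
    also have "\<dots> = pmf ZZ z" unfolding mx my by (cases "pmf ZZ z = 0") simp_all
    finally show "(\<Sum>x\<in>UNIV. \<Sum>y\<in>UNIV. q (x,y,z)) = pmf ZZ z" .
  qed
  also have "\<dots> = 1" by (rule sum_pmf_eq_1) auto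
  finally have sq: "(\<Sum>t\<in>set_pmf J. q t) \<le> 1" .
  have "(\<Sum>t\<in>set_pmf J. F t) \<ge> (\<Sum>t\<in>set_pmf J. (pmf J t - q t) / ln 2)"
    by (rule sum_mono) (rule FT)
  also have "(\<Sum>t\<in>set_pmf J. (pmf J t - q t) / ln 2) = (1 - (\<Sum>t\<in>set_pmf J. q t)) / ln 2"
    by (simp add: sum_divide_distrib[symmetric] sum_subtractf s1)
  finally show ?thesis using sq cm
    by (smt (verit) divide_nonneg_pos ln_gt_zero one_less_numeral_iff semiring_norm(76))
qed

definition phiM where
  "phiM w = (case w of ((u10, u11, v11, v20, v22, x1, x2), y) \<Rightarrow>
      ((u10, (), (v11, u11), v20, v22, x1, x2), y))"

lemma fd_merge: "full_dist W (merge_U11 P) = map_pmf phiM (full_dist W P)"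
  unfolding full_dist_def merge_U11_def
  by (simp add: bind_map_pmf map_bind_pmf pmf.map_comp o_def phiM_def split_def)

lemma g_phi:
  "gU10 (phiM w) = gU10 w" "gU11 (phiM w) = ()" "gV11 (phiM w) = (gV11 w, gU11 w)"
  "gV20 (phiM w) = gV20 w" "gV22 (phiM w) = gV22 w" "gY1 (phiM w) = gY1 w" "gY2 (phiM w) = gY2 w"
  by (auto simp: phiM_def gU10_def gU11_def gV11_def gV20_def gV22_def gY1_def gY2_def split: prod.splits)

lemma part1:
  fixes W :: "'x1::finite \<times> 'x2::finite \<Rightarrow> ('y1::finite \<times> 'y2::finite) pmf"
    and P :: "('u10::finite \<times> 'u11::finite \<times> 'v11::finite \<times> 'v20::finite \<times> 'v22::finite
               \<times> 'x1 \<times> 'x2) pmf"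
  shows "RCC W P \<subseteq> RCC W (merge_U11 P)"
proof -
  define M where "M = full_dist W P"
  have i1: "inj (\<lambda>(a::'v11,b::'u11,c::'v20,d::'u10). ((a,b),(),c,d))" by (auto simp: inj_def)
  have i2: "inj (\<lambda>(a::'v11,b::'u11). ((a,b),()))" by (auto simp: inj_def)
  have i3: "inj (\<lambda>(a::'u11,b::'v11). ((),(b,a)))" by (auto simp: inj_def)
  have i4: "inj (\<lambda>(a::'v11,b::'u11,c::'v20). ((a,b),(),c))" by (auto simp: inj_def)
  have e1: "mi (map_pmf phiM M) gY1 (\<lambda>w. (gV11 w, gU11 w, gV20 w, gU10 w))
          = mi M gY1 (\<lambda>w. (gV11 w, gU11 w, gV20 w, gU10 w))"
    unfolding mi_def cmi_map g_phi
    using cmi_relabel[OF inj_on_id i1 inj_on_id, of M gY1 "\<lambda>w. (gV11 w, gU11 w, gV20 w, gU10 w)" "\<lambda>_. ()"]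
    by simp
  have e2: "cmi (map_pmf phiM M) gY1 (\<lambda>w. (gV11 w, gU11 w)) (\<lambda>w. (gV20 w, gU10 w))
          = cmi M gY1 (\<lambda>w. (gV11 w, gU11 w)) (\<lambda>w. (gV20 w, gU10 w))"
    unfolding cmi_map g_phi
    using cmi_relabel[OF inj_on_id i2 inj_on_id, of M gY1 "\<lambda>w. (gV11 w, gU11 w)" "\<lambda>w. (gV20 w, gU10 w)"]
    by simp
  have e3: "cmi (map_pmf phiM M) gV22 (\<lambda>w. (gU11 w, gV11 w)) (\<lambda>w. (gV20 w, gU10 w))
          = cmi M gV22 (\<lambda>w. (gU11 w, gV11 w)) (\<lambda>w. (gV20 w, gU10 w))"
    unfolding cmi_map g_phi
    using cmi_relabel[OF inj_on_id i3 inj_on_id, of M gV22 "\<lambda>w. (gU11 w, gV11 w)" "\<lambda>w. (gV20 w, gU10 w)"]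
    by simp
  have e4: "cmi (map_pmf phiM M) gY1 (\<lambda>w. (gV11 w, gU11 w, gV20 w)) gU10
          = cmi M gY1 (\<lambda>w. (gV11 w, gU11 w, gV20 w)) gU10"
    unfolding cmi_map g_phi
    using cmi_relabel[OF inj_on_id i4 inj_on_id, of M gY1 "\<lambda>w. (gV11 w, gU11 w, gV20 w)" gU10]
    by simp
  have e5: "cmi (map_pmf phiM M) (\<lambda>w. (gV22 w, gV20 w)) gU11 gU10 = 0"
    unfolding cmi_map g_phi by (rule cmi_const)
  have n5: "cmi M (\<lambda>w. (gV22 w, gV20 w)) gU11 gU10 \<ge> 0"
    by (rule cmi_nonneg)
  have s1: "cmi (map_pmf phiM M) gY2 (\<lambda>w. (gV20 w, gV22 w)) gU10 = cmi M gY2 (\<lambda>w. (gV20 w, gV22 w)) gU10"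
    "mi (map_pmf phiM M) gY2 (\<lambda>w. (gV22 w, gV20 w, gU10 w)) = mi M gY2 (\<lambda>w. (gV22 w, gV20 w, gU10 w))"
    "cmi (map_pmf phiM M) gY2 gV22 (\<lambda>w. (gV20 w, gU10 w)) = cmi M gY2 gV22 (\<lambda>w. (gV20 w, gU10 w))"
    "mi (map_pmf phiM M) gY2 (\<lambda>w. (gV20 w, gV22 w, gU10 w)) = mi M gY2 (\<lambda>w. (gV20 w, gV22 w, gU10 w))"
    unfolding mi_def cmi_map g_phi by simp_all
  show ?thesis
    unfolding RCC_def Let_def fd_merge M_def[symmetric]
    unfolding e1 e2 e3 e4 e5 s1
    using n5 by auto
qed

theorem mainTheorem3:
  fixes W :: "'x1::finite \<times> 'x2::finite \<Rightarrow> ('y1::finite \<times> 'y2::finite) pmf"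
    and P :: "('u10::finite \<times> 'u11::finite \<times> 'v11::finite \<times> 'v20::finite \<times> 'v22::finite
               \<times> 'x1 \<times> 'x2) pmf"
  shows "RCC W P \<subseteq> RCC W (merge_U11 P)
    \<and> (\<Union>Q :: ('u10 \<times> 'u11 \<times> 'v11 \<times> 'v20 \<times> 'v22 \<times> 'x1 \<times> 'x2) pmf. RCC W Q)
        \<subseteq> (\<Union>Q' :: ('u10 \<times> unit \<times> ('v11 \<times> 'u11) \<times> 'v20 \<times> 'v22 \<times> 'x1 \<times> 'x2) pmf. RCC W Q')"
proof
  show "RCC W P \<subseteq> RCC W (merge_U11 P)" by (rule part1)
  show "(\<Union>Q :: ('u10 \<times> 'u11 \<times> 'v11 \<times> 'v20 \<times> 'v22 \<times> 'x1 \<times> 'x2) pmf. RCC W Q)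
        \<subseteq> (\<Union>Q' :: ('u10 \<times> unit \<times> ('v11 \<times> 'u11) \<times> 'v20 \<times> 'v22 \<times> 'x1 \<times> 'x2) pmf. RCC W Q')"
    using part1[of W] by blast
qed

end
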